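(* Let $\lambda_1,\lambda_2>0$, $\nu\in(0,1)$ and set $c_\nu:=\nu^{\nu/(1-\nu)}-\nu^{1/(1-\nu)}$. Define $$I^{(1)}_{\mathrm{MD}}(x):=\begin{cases}c_\nu\left(\frac{x}{\lambda_1}\right)^{1/(1-\nu)} & x\geq0,\\ c_\nu\left(\frac{x}{-\lambda_2}\right)^{1/(1-\nu)} & x<0,\end{cases}$$ and define $I^{(2)}_{\mathrm{MD},\underline{\lambda}}$ as follows: if $\lambda_1=\lambda_2=\lambda$, $I^{(2)}_{\mathrm{MD},\underline{\lambda}}(x):=((\nu/2)^{\nu/(2-\nu)}-(\nu/2)^{2/(2-\nu)})\left(\frac{x^2}{\lambda}\right)^{1/(2-\nu)}$ for all $x\in\mathbb{R}$; if $\lambda_1>\lambda_2$, $I^{(2)}_{\mathrm{MD},\underline{\lambda}}(x):=c_\nu\left(\frac{x}{\lambda_1-\lambda_2}\right)^{1/(1-\nu)}$ for $x\geq0$ and $:=\infty$ for $x<0$; if $\lambda_1<\lambda_2$, $I^{(2)}_{\mathrm{MD},\underline{\lambda}}(x):=c_\nu\left(\frac{x}{-(\lambda_2-\lambda_1)}\right)^{1/(1-\nu)}$ for $x\leq0$ and $:=\infty$ for $x>0$. Then $I^{(1)}_{\mathrm{MD}}(0)=I^{(2)}_{\mathrm{MD},\underline{\lambda}}(0)=0$, and for $x\neq0$: (1) if $\lambda_1\neq\lambda_2$, then $I^{(2)}_{\mathrm{MD},\underline{\lambda}}(x)>I^{(1)}_{\mathrm{MD}}(x)>0$; (2) if $\lambda_1=\lambda_2=\lambda$,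 there exists $\delta_{\nu,\lambda}>0$ such that $I^{(2)}_{\mathrm{MD},\underline{\lambda}}(x)>I^{(1)}_{\mathrm{MD}}(x)>0$ if $0<|x|<\delta_{\nu,\lambda}$, $I^{(1)}_{\mathrm{MD}}(x)>I^{(2)}_{\mathrm{MD},\underline{\lambda}}(x)>0$ if $|x|>\delta_{\nu,\lambda}$, and $I^{(2)}_{\mathrm{MD},\underline{\lambda}}(x)=I^{(1)}_{\mathrm{MD}}(x)>0$ if $|x|=\delta_{\nu,\lambda}$.
   Context: In the paper these are the moderate deviation rate functions for the fractional Skellam processes of type 1 and type 2 respectively; the claim concerns only the explicitly defined functions above. *)

theory Defs
  imports Complex_Main "HOL-Library.Extended_Real"
begin

definition c_nu :: "real \<Rightarrow> real" where
  "c_nu \<nu> = \<nu> powr (\<nu> / (1 - \<nu>)) - \<nu> powr (1 / (1 - \<nu>))"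

definition I1_MD :: "real \<Rightarrow> real \<Rightarrow> real \<Rightarrow> real \<Rightarrow> real" where
  "I1_MD \<nu> l1 l2 x =
     (if x \<ge> 0 then c_nu \<nu> * (x / l1) powr (1 / (1 - \<nu>))
      else c_nu \<nu> * (x / (- l2)) powr (1 / (1 - \<nu>)))"

definition I2_MD :: "real \<Rightarrow> real \<Rightarrow> real \<Rightarrow> real \<Rightarrow> ereal" where
  "I2_MD \<nu> l1 l2 x =
     (if l1 = l2 then
        ereal (((\<nu>/2) powr (\<nu> / (2 - \<nu>)) - (\<nu>/2) powr (2 / (2 - \<nu>)))
               * (x^2 / l1) powr (1 / (2 - \<nu>)))
      else if l1 > l2 then
        (if x \<ge> 0 then ereal (c_nu \<nu> * (x / (l1 - l2)) powr (1 / (1 - \<nu>))) else \<infinity>)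
      else
        (if x \<le> 0 then ereal (c_nu \<nu> * (x / (- (l2 - l1))) powr (1 / (1 - \<nu>))) else \<infinity>))"

end

theory Submission
  imports Defs
begin

lemma c_nu_pos: fixes \<nu> :: real assumes "0 < \<nu>" "\<nu> < 1" shows "c_nu \<nu> > 0"
proof -
  have "\<nu> powr (1 / (1 - \<nu>)) < \<nu> powr (\<nu> / (1 - \<nu>))"
    using assms by (intro powr_less_mono') (auto simp: divide_strict_right_mono)
  thus ?thesis unfolding c_nu_def by simp
qed

lemma d_pos: fixes \<nu> :: real assumes "0 < \<nu>" "\<nu> < 1"
  shows "(\<nu>/2) powr (\<nu> / (2 - \<nu>)) - (\<nu>/2) powr (2 / (2 - \<nu>)) > 0"
proof -
  have "(\<nu>/2) powr (2 / (2 - \<nu>)) < (\<nu>/2) powr (\<nu> / (2 - \<nu>))"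
    using assms by (intro powr_less_mono') (auto simp: divide_strict_right_mono)
  thus ?thesis by simp
qed

lemma sq_powr: fixes t q :: real assumes "t > 0" shows "(t^2) powr q = t powr (2*q)"
proof -
  have "t powr 2 = t^2" using assms by (simp add: powr_numeral)
  thus ?thesis using assms by (metis powr_powr)
qed

theorem proposition5p3:
  fixes \<nu> l1 l2 :: real
  assumes "l1 > 0" and "l2 > 0" and "0 < \<nu>" and "\<nu> < 1"
  shows "I1_MD \<nu> l1 l2 0 = 0 \<and> I2_MD \<nu> l1 l2 0 = 0
    \<and> (l1 \<noteq> l2 \<longrightarrow> (\<forall>x. x \<noteq> 0 \<longrightarrow>
          I2_MD \<nu> l1 l2 x > ereal (I1_MD \<nu> l1 l2 x) \<and> I1_MD \<nu> l1 l2 x > 0))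
    \<and> (l1 = l2 \<longrightarrow> (\<exists>\<delta>>0. \<forall>x.
          (0 < \<bar>x\<bar> \<and> \<bar>x\<bar> < \<delta> \<longrightarrow>
             I2_MD \<nu> l1 l2 x > ereal (I1_MD \<nu> l1 l2 x) \<and> I1_MD \<nu> l1 l2 x > 0)
        \<and> (\<bar>x\<bar> > \<delta> \<longrightarrow>
             ereal (I1_MD \<nu> l1 l2 x) > I2_MD \<nu> l1 l2 x \<and> I2_MD \<nu> l1 l2 x > 0)
        \<and> (\<bar>x\<bar> = \<delta> \<longrightarrow>
             I2_MD \<nu> l1 l2 x = ereal (I1_MD \<nu> l1 l2 x) \<and> I1_MD \<nu> l1 l2 x > 0)))"
proof -
  define c where "c = c_nu \<nu>"
  define p where "p = 1 / (1 - \<nu>)"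
  define q where "q = 1 / (2 - \<nu>)"
  define d where "d = (\<nu>/2) powr (\<nu> / (2 - \<nu>)) - (\<nu>/2) powr (2 / (2 - \<nu>))"
  have c: "c > 0" unfolding c_def using c_nu_pos assms by auto
  have d: "d > 0" unfolding d_def using d_pos assms by auto
  have p: "p > 0" unfolding p_def using assms by auto
  have q: "q > 0" unfolding q_def using assms by auto
  define r where "r = p - 2*q"
  have r: "r > 0"
  proof -
    have "r = \<nu> / ((1 - \<nu>) * (2 - \<nu>))" unfolding r_def p_def q_def using assms
      by (simp add: field_simps)
    thus ?thesis using assms by simp
  qed
  have P1: "I1_MD \<nu> l1 l2 0 = 0 \<and> I2_MD \<nu> l1 l2 0 = 0"
    by (auto simp: I1_MD_def I2_MD_def zero_ereal_def)
  have I1p: "I1_MD \<nu> l1 l2 x = c * (x / l1) powr p" if "x \<ge> 0" for x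
    using that unfolding I1_MD_def c_def p_def by simp
  have I1n: "I1_MD \<nu> l1 l2 x = c * ((-x) / l2) powr p" if "x < 0" for x
  proof -
    have "x / (- l2) = (-x) / l2" by (simp only: divide_minus_right minus_divide_left)
    thus ?thesis using that unfolding I1_MD_def c_def p_def by simp
  qed
  have I1pos: "I1_MD \<nu> l1 l2 x > 0" if "x \<noteq> 0" for x
  proof (cases "x > 0")
    case True
    have "(x / l1) powr p > 0" using True assms by simp
    thus ?thesis using I1p[of x] True c by simp
  next
    case False
    hence "x < 0" using that by simp
    moreover have "((-x) / l2) powr p > 0" using \<open>x < 0\<close> assms by simp
    ultimately show ?thesis using I1n[of x] c by simp
  qed
  have P2: "l1 \<noteq> l2 \<longrightarrow> (\<forall>x. x \<noteq> 0 \<longrightarrow>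
          I2_MD \<nu> l1 l2 x > ereal (I1_MD \<nu> l1 l2 x) \<and> I1_MD \<nu> l1 l2 x > 0)"
  proof (intro impI allI)
    fix x :: real assume ne: "l1 \<noteq> l2" and x: "x \<noteq> 0"
    have pos: "I1_MD \<nu> l1 l2 x > 0" using I1pos x by simp
    have "I2_MD \<nu> l1 l2 x > ereal (I1_MD \<nu> l1 l2 x)"
    proof (cases "l1 > l2")
      case True
      show ?thesis
      proof (cases "x > 0")
        case xp: True
        have "(x / l1) powr p < (x / (l1 - l2)) powr p"
          using xp True assms p by (intro powr_less_mono2) (auto intro: divide_strict_left_mono)
        hence "c * (x / l1) powr p < c * (x / (l1 - l2)) powr p" using c by simp
        moreover have "I2_MD \<nu> l1 l2 x = ereal (c * (x / (l1 - l2)) powr p)"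
          using xp True unfolding I2_MD_def c_def p_def by simp
        ultimately show ?thesis using I1p[of x] xp by simp
      next
        case False
        hence "I2_MD \<nu> l1 l2 x = \<infinity>" using x True unfolding I2_MD_def by simp
        thus ?thesis by simp
      qed
    next
      case False
      hence lt: "l1 < l2" using ne by auto
      show ?thesis
      proof (cases "x < 0")
        case xn: True
        define y where "y = -x"
        have y: "y > 0" using xn y_def by simp
        have e1: "x / (- (l2 - l1)) = y / (l2 - l1)" unfolding y_def by (simp only: divide_minus_right minus_divide_left)
        have "(y / l2) powr p < (y / (l2 - l1)) powr p"
          using y lt assms p by (intro powr_less_mono2) (auto intro: divide_strict_left_mono)
        hence "c * (y / l2) powr p < c * (y / (l2 - l1)) powr p" using c by simp
        moreover have "I2_MD \<nu> l1 l2 x = ereal (c * (y / (l2 - l1)) powr p)"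
          using xn lt e1 unfolding I2_MD_def c_def p_def by simp
        ultimately show ?thesis using I1n[of x] xn y_def by simp
      next
        case False
        hence "I2_MD \<nu> l1 l2 x = \<infinity>" using x lt unfolding I2_MD_def by simp
        thus ?thesis by simp
      qed
    qed
    thus "I2_MD \<nu> l1 l2 x > ereal (I1_MD \<nu> l1 l2 x) \<and> I1_MD \<nu> l1 l2 x > 0" using pos by simp
  qed
  have P3: "l1 = l2 \<longrightarrow> (\<exists>\<delta>>0. \<forall>x.
          (0 < \<bar>x\<bar> \<and> \<bar>x\<bar> < \<delta> \<longrightarrow>
             I2_MD \<nu> l1 l2 x > ereal (I1_MD \<nu> l1 l2 x) \<and> I1_MD \<nu> l1 l2 x > 0)
        \<and> (\<bar>x\<bar> > \<delta> \<longrightarrow>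
             ereal (I1_MD \<nu> l1 l2 x) > I2_MD \<nu> l1 l2 x \<and> I2_MD \<nu> l1 l2 x > 0)
        \<and> (\<bar>x\<bar> = \<delta> \<longrightarrow>
             I2_MD \<nu> l1 l2 x = ereal (I1_MD \<nu> l1 l2 x) \<and> I1_MD \<nu> l1 l2 x > 0))"
  proof
    assume eq: "l1 = l2"
    define l where "l = l1"
    have l: "l > 0" using assms l_def by simp
    define K where "K = c * l powr q / (d * l powr p)"
    have K: "K > 0" unfolding K_def using c d l by simp
    define \<delta> where "\<delta> = (1/K) powr (1/r)"
    have \<delta>: "\<delta> > 0" unfolding \<delta>_def using K by simp
    have \<delta>r: "\<delta> powr r = 1/K" unfolding \<delta>_def using K r by (simp add: powr_powr)
    have key: "I1_MD \<nu> l1 l2 x = (d * \<bar>x\<bar> powr (2*q) / l powr q) * (K * \<bar>x\<bar> powr r)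
           \<and> I2_MD \<nu> l1 l2 x = ereal (d * \<bar>x\<bar> powr (2*q) / l powr q)" if x: "x \<noteq> 0" for x
    proof
      have a: "\<bar>x\<bar> > 0" using x by simp
      have "I1_MD \<nu> l1 l2 x = c * (\<bar>x\<bar> / l) powr p"
      proof (cases "x \<ge> 0")
        case True thus ?thesis using I1p[of x] l_def by simp
      next
        case False thus ?thesis using I1n[of x] l_def eq by simp
      qed
      also have "\<dots> = c * \<bar>x\<bar> powr p / l powr p" by (simp add: powr_divide)
      also have "\<bar>x\<bar> powr p = \<bar>x\<bar> powr (2*q) * \<bar>x\<bar> powr r"
        unfolding r_def by (simp add: powr_add[symmetric])
      finally show "I1_MD \<nu> l1 l2 x = (d * \<bar>x\<bar> powr (2*q) / l powr q) * (K * \<bar>x\<bar> powr r)"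
        unfolding K_def using d l by (simp add: field_simps)
      have "x^2 = \<bar>x\<bar>^2" by simp
      hence "(x^2 / l) powr q = \<bar>x\<bar> powr (2*q) / l powr q"
        using sq_powr[OF a] by (simp add: powr_divide)
      thus "I2_MD \<nu> l1 l2 x = ereal (d * \<bar>x\<bar> powr (2*q) / l powr q)"
        unfolding I2_MD_def d_def[symmetric] q_def[symmetric] l_def using eq by simp
    qed
    show "\<exists>\<delta>>0. \<forall>x.
          (0 < \<bar>x\<bar> \<and> \<bar>x\<bar> < \<delta> \<longrightarrow>
             I2_MD \<nu> l1 l2 x > ereal (I1_MD \<nu> l1 l2 x) \<and> I1_MD \<nu> l1 l2 x > 0)
        \<and> (\<bar>x\<bar> > \<delta> \<longrightarrow>
             ereal (I1_MD \<nu> l1 l2 x) > I2_MD \<nu> l1 l2 x \<and> I2_MD \<nu> l1 l2 x > 0)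
        \<and> (\<bar>x\<bar> = \<delta> \<longrightarrow>
             I2_MD \<nu> l1 l2 x = ereal (I1_MD \<nu> l1 l2 x) \<and> I1_MD \<nu> l1 l2 x > 0)"
    proof (rule exI[of _ \<delta>], intro conjI[OF \<delta>] allI)
      fix x :: real
      {
        assume x: "x \<noteq> 0"
        define B where "B = d * \<bar>x\<bar> powr (2*q) / l powr q"
        have B: "B > 0" unfolding B_def using d l x by simp
        have k1: "I1_MD \<nu> l1 l2 x = B * (K * \<bar>x\<bar> powr r)" and k2: "I2_MD \<nu> l1 l2 x = ereal B"
          using key[OF x] B_def by auto
        have pos: "K * \<bar>x\<bar> powr r > 0" using K x by simp
        have cmp: "K * \<bar>x\<bar> powr r < 1 \<longleftrightarrow> \<bar>x\<bar> < \<delta>"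
        proof -
          have "K * \<bar>x\<bar> powr r < 1 \<longleftrightarrow> \<bar>x\<bar> powr r < \<delta> powr r"
            unfolding \<delta>r using K by (simp add: pos_less_divide_eq eq_divide_eq mult.commute)
          also have "\<dots> \<longleftrightarrow> \<bar>x\<bar> < \<delta>"
            using r \<delta> x by (meson abs_ge_zero powr_less_cancel2 powr_less_mono2 zero_less_abs_iff)
          finally show ?thesis .
        qed
        have cmp2: "K * \<bar>x\<bar> powr r = 1 \<longleftrightarrow> \<bar>x\<bar> = \<delta>"
        proof -
          have "K * \<bar>x\<bar> powr r = 1 \<longleftrightarrow> \<bar>x\<bar> powr r = \<delta> powr r"
            unfolding \<delta>r using K by (simp add: pos_less_divide_eq eq_divide_eq mult.commute)
          also have "\<dots> \<longleftrightarrow> \<bar>x\<bar> = \<delta>"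
          proof
            assume e: "\<bar>x\<bar> powr r = \<delta> powr r"
            show "\<bar>x\<bar> = \<delta>"
            proof (rule ccontr)
              assume "\<bar>x\<bar> \<noteq> \<delta>"
              hence "\<bar>x\<bar> < \<delta> \<or> \<delta> < \<bar>x\<bar>" by linarith
              moreover { assume "\<bar>x\<bar> < \<delta>"
                hence "\<bar>x\<bar> powr r < \<delta> powr r" by (intro powr_less_mono2[OF r]) auto }
              moreover { assume "\<delta> < \<bar>x\<bar>"
                hence "\<delta> powr r < \<bar>x\<bar> powr r" using \<delta> by (intro powr_less_mono2[OF r]) auto }
              ultimately show False using e by auto
            qed
          qed simp
          finally show ?thesis .
        qed
        define k where "k = K * \<bar>x\<bar> powr r"
        have k1': "I1_MD \<nu> l1 l2 x = B * k" using k1 k_def by simp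
        have r1: "\<bar>x\<bar> < \<delta> \<Longrightarrow> I2_MD \<nu> l1 l2 x > ereal (I1_MD \<nu> l1 l2 x) \<and> I1_MD \<nu> l1 l2 x > 0"
        proof -
          assume h: "\<bar>x\<bar> < \<delta>"
          hence "k < 1" using cmp k_def by simp
          hence "B * k < B * 1" using B by (intro mult_strict_left_mono) auto
          moreover have "B * k > 0" using B pos k_def by simp
          ultimately show ?thesis using k1' k2 by simp
        qed
        have r2: "\<bar>x\<bar> > \<delta> \<Longrightarrow> ereal (I1_MD \<nu> l1 l2 x) > I2_MD \<nu> l1 l2 x \<and> I2_MD \<nu> l1 l2 x > 0"
        proof -
          assume h: "\<bar>x\<bar> > \<delta>"
          hence "\<not> k < 1" "k \<noteq> 1" using cmp cmp2 k_def by auto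
          hence "k > 1" by simp
          hence "B * 1 < B * k" using B by (intro mult_strict_left_mono) auto
          thus ?thesis using k1' k2 B by (simp add: zero_ereal_def)
        qed
        have r3: "\<bar>x\<bar> = \<delta> \<Longrightarrow> I2_MD \<nu> l1 l2 x = ereal (I1_MD \<nu> l1 l2 x) \<and> I1_MD \<nu> l1 l2 x > 0"
        proof -
          assume h: "\<bar>x\<bar> = \<delta>"
          hence "k = 1" using cmp2 k_def by simp
          thus ?thesis using k1' k2 B by simp
        qed
        note r1 r2 r3
      } note X = this
      have A: "0 < \<bar>x\<bar> \<and> \<bar>x\<bar> < \<delta> \<longrightarrow>
             I2_MD \<nu> l1 l2 x > ereal (I1_MD \<nu> l1 l2 x) \<and> I1_MD \<nu> l1 l2 x > 0"
      proof
        assume h: "0 < \<bar>x\<bar> \<and> \<bar>x\<bar> < \<delta>"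
        hence x: "x \<noteq> 0" by simp
        show "I2_MD \<nu> l1 l2 x > ereal (I1_MD \<nu> l1 l2 x) \<and> I1_MD \<nu> l1 l2 x > 0"
          using X(1)[OF x] h by blast
      qed
      have B: "\<bar>x\<bar> > \<delta> \<longrightarrow>
             ereal (I1_MD \<nu> l1 l2 x) > I2_MD \<nu> l1 l2 x \<and> I2_MD \<nu> l1 l2 x > 0"
      proof
        assume h: "\<bar>x\<bar> > \<delta>"
        hence x: "x \<noteq> 0" using \<delta> by auto
        show "ereal (I1_MD \<nu> l1 l2 x) > I2_MD \<nu> l1 l2 x \<and> I2_MD \<nu> l1 l2 x > 0"
          using X(2)[OF x] h by blast
      qed
      have C: "\<bar>x\<bar> = \<delta> \<longrightarrow>
             I2_MD \<nu> l1 l2 x = ereal (I1_MD \<nu> l1 l2 x) \<and> I1_MD \<nu> l1 l2 x > 0"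
      proof
        assume h: "\<bar>x\<bar> = \<delta>"
        hence x: "x \<noteq> 0" using \<delta> by auto
        show "I2_MD \<nu> l1 l2 x = ereal (I1_MD \<nu> l1 l2 x) \<and> I1_MD \<nu> l1 l2 x > 0"
          using X(3)[OF x] h by blast
      qed
      show "(0 < \<bar>x\<bar> \<and> \<bar>x\<bar> < \<delta> \<longrightarrow>
             I2_MD \<nu> l1 l2 x > ereal (I1_MD \<nu> l1 l2 x) \<and> I1_MD \<nu> l1 l2 x > 0)
        \<and> (\<bar>x\<bar> > \<delta> \<longrightarrow>
             ereal (I1_MD \<nu> l1 l2 x) > I2_MD \<nu> l1 l2 x \<and> I2_MD \<nu> l1 l2 x > 0)
        \<and> (\<bar>x\<bar> = \<delta> \<longrightarrow>
             I2_MD \<nu> l1 l2 x = ereal (I1_MD \<nu> l1 l2 x) \<and> I1_MD \<nu> l1 l2 x > 0)"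
        using A B C by blast
    qed
  qed
  have P1a: "I1_MD \<nu> l1 l2 0 = 0" and P1b: "I2_MD \<nu> l1 l2 0 = 0" using P1 by simp_all
  show ?thesis by (intro conjI P1a P1b P2 P3)
qed

end
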